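(* Let $\mathcal{C}$ be an $[n,k]_q$ MWS code. If $a,b\in\mathcal{C}\setminus\{0\}$ satisfy $V(a)=V(b)$, then $a=\lambda b$ for some $\lambda\in\mathbb{F}_q^*$.
   Context: $\alpha$ is a fixed primitive element of $\mathbb{F}_q$. An $[n,k]_q$ code is a $k$-dimensional subspace of $\mathbb{F}_q^n$ (non-degenerate if $k\ge 2$) with Hamming weight $w$; it is MWS if $|\{w(c):c\in\mathcal{C}\setminus\{0\}\}|=\frac{q^k-1}{q-1}$. For $c\in\mathbb{F}_q^n$, $\beta\in\mathbb{F}_q$, $c[\beta]=|\{l:c_l=\beta\}|$ and $V(c)=(c[\alpha],\dots,c[\alpha^{q-1}],c[0])$. *)

theory Defs
  imports "HOL-Analysis.Analysis"
begin

text \<open>Vectors of F_q^n are modelled as elements of the type 'a ^ 'n, where 'a is a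
finite field (q = CARD('a)) and the finite index type 'n has n = CARD('n) elements.
Scalar multiplication is the library operation (*s).\<close>

definition hamming_weight :: "'a::zero ^ 'n \<Rightarrow> nat" where
  "hamming_weight c = card {l. c $ l \<noteq> 0}"

text \<open>c[beta] = number of coordinates of c equal to beta\<close>
definition coord_count :: "'a ^ 'n \<Rightarrow> 'a \<Rightarrow> nat" where
  "coord_count c \<beta> = card {l. c $ l = \<beta>}"

text \<open>alpha is a primitive element of the finite field (generator of the multiplicative group)\<close>
definition primitive_elem :: "'a::field \<Rightarrow> bool" where
  "primitive_elem \<alpha> \<longleftrightarrow> \<alpha> \<noteq> 0 \<and> (\<forall>x. x \<noteq> 0 \<longrightarrow> (\<exists>i::nat. x = \<alpha> ^ i))"

text \<open>V(c) = (c[alpha], ..., c[alpha^(q-1)], c[0])\<close>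
definition Vvec :: "'a::{finite,field} \<Rightarrow> 'a ^ 'n \<Rightarrow> nat list" where
  "Vvec \<alpha> c = map (\<lambda>i. coord_count c (\<alpha> ^ i)) [1..<CARD('a)] @ [coord_count c 0]"

text \<open>An [n,k]_q linear code: a k-dimensional subspace of F_q^n;
  as a standing convention it is non-degenerate (no coordinate identically zero) if k >= 2.\<close>
definition nondegenerate :: "('a::zero ^ 'n) set \<Rightarrow> bool" where
  "nondegenerate C \<longleftrightarrow> (\<forall>l. \<exists>c\<in>C. c $ l \<noteq> 0)"

definition linear_code :: "('a::{finite,field} ^ 'n) set \<Rightarrow> nat \<Rightarrow> bool" where
  "linear_code C k \<longleftrightarrow>
     module.subspace ((*s) :: 'a \<Rightarrow> 'a ^ 'n \<Rightarrow> 'a ^ 'n) C \<and>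
     vector_space.dim ((*s) :: 'a \<Rightarrow> 'a ^ 'n \<Rightarrow> 'a ^ 'n) C = k \<and>
     (k \<ge> 2 \<longrightarrow> nondegenerate C)"

text \<open>MWS (maximum weight spectrum): the number of distinct nonzero weights is (q^k-1)/(q-1).\<close>
definition MWS :: "('a::{finite,field} ^ 'n) set \<Rightarrow> nat \<Rightarrow> bool" where
  "MWS C k \<longleftrightarrow> linear_code C k \<and>
     card (hamming_weight ` (C - {0})) = (CARD('a) ^ k - 1) div (CARD('a) - 1)"

end

theory Submission
  imports Defs
begin

lemma card_span_indep:
  fixes B :: "('a::{finite,field} ^ 'n) set"
  shows "finite B \<Longrightarrow> vec.independent B \<Longrightarrow> card (vec.span B) = CARD('a) ^ card B"
proof (induction B rule: finite_induct)
  case empty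
  then show ?case by simp
next
  case (insert x B)
  have xn: "x \<notin> vec.span B"
    using insert.prems insert.hyps by (simp add: vec.independent_insert)
  have indB: "vec.independent B"
    using insert.prems vec.independent_mono by blast
  have eq: "vec.span (insert x B) = (\<lambda>(c,y). c *s x + y) ` (UNIV \<times> vec.span B)"
  proof safe
    fix z assume "z \<in> vec.span (insert x B)"
    then obtain c where "z - c *s x \<in> vec.span B" unfolding vec.span_insert by auto
    then show "z \<in> (\<lambda>(c,y). c *s x + y) ` (UNIV \<times> vec.span B)"
      by (intro image_eqI[of _ _ "(c, z - c *s x)"]) auto
  next
    fix c y assume "y \<in> vec.span B"
    then show "c *s x + y \<in> vec.span (insert x B)"
      by (meson insertI1 subset_insertI vec.span_add vec.span_base vec.span_mono vec.span_scale subsetD)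
  qed
  have inj: "inj_on (\<lambda>(c,y). c *s x + y) (UNIV \<times> vec.span B)"
  proof (rule inj_onI, clarify)
    fix c y d z
    assume y: "y \<in> vec.span B" and z: "z \<in> vec.span B" and e: "c *s x + y = d *s x + z"
    have "(c - d) *s x = z - y" using e by (simp add: algebra_simps vector_sub_rdistrib)
    moreover have "z - y \<in> vec.span B" using y z vec.span_diff by blast
    ultimately have cd: "c = d"
    proof -
      assume a: "(c - d) *s x = z - y" "z - y \<in> vec.span B"
      show "c = d"
      proof (rule ccontr)
        assume "c \<noteq> d"
        then have i: "inverse (c - d) * (c - d) = 1" by simp
        have "x = inverse (c - d) *s ((c - d) *s x)" by (simp only: vector_smult_assoc i vector_smult_lid)
        then have "x \<in> vec.span B" using a vec.span_scale by metis
        then show False using xn by simp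
      qed
    qed
    then show "c = d \<and> y = z" using e by simp
  qed
  have "card (vec.span (insert x B)) = card ((UNIV::'a set) \<times> vec.span B)"
    unfolding eq by (rule card_image[OF inj])
  also have "\<dots> = CARD('a) * CARD('a) ^ card B" using insert.IH[OF indB] by (simp add: card_cartesian_product)
  finally show ?case using insert.hyps by simp
qed

definition line :: "'a::field ^ 'n \<Rightarrow> ('a ^ 'n) set" where
  "line x = (\<lambda>c. c *s x) ` (UNIV - {0})"

lemma hw_scale:
  fixes x :: "'a::field ^ 'n"
  assumes "c \<noteq> 0" shows "hamming_weight (c *s x) = hamming_weight x"
  unfolding hamming_weight_def using assms by simp

lemma hw_count:
  fixes x :: "'a::field ^ 'n::finite"
  shows "hamming_weight x = CARD('n) - coord_count x 0"
proof -
  have "{l. x $ l \<noteq> 0} = UNIV - {l. x $ l = 0}" by auto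
  then show ?thesis unfolding hamming_weight_def coord_count_def
    by (simp add: card_Diff_subset)
qed

lemma in_line_self: "x \<in> line x"
  unfolding line_def by (rule image_eqI[of _ _ 1]) auto

lemma line_sub:
  fixes x :: "'a::field ^ 'n"
  assumes "y \<in> line x" shows "line y = line x"
proof -
  obtain c where c: "c \<noteq> 0" "y = c *s x" using assms unfolding line_def by auto
  show ?thesis
  proof
    show "line y \<subseteq> line x"
      unfolding line_def c using c(1) by (auto simp: vector_smult_assoc)
    show "line x \<subseteq> line y"
    proof
      fix z assume "z \<in> line x"
      then obtain d where d: "d \<noteq> 0" "z = d *s x" unfolding line_def by auto
      have "z = (d * inverse c) *s y" using c d by (simp add: vector_smult_assoc)
      then show "z \<in> line y" unfolding line_def using c d by (intro image_eqI[of _ _ "d * inverse c"]) auto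
    qed
  qed
qed

lemma card_line:
  fixes x :: "'a::{finite,field} ^ 'n"
  assumes "x \<noteq> 0" shows "card (line x) = CARD('a) - 1"
proof -
  obtain l where l: "x $ l \<noteq> 0" using assms by (metis vec_eq_iff zero_index)
  have "inj_on (\<lambda>c. c *s x) (UNIV - {0})"
  proof (rule inj_onI)
    fix c d assume "c *s x = d *s x"
    then have "c = d \<or> x = 0" by simp
    then show "c = d" using assms by blast
  qed
  then have "card (line x) = card (UNIV - {0::'a})" unfolding line_def by (rule card_image)
  then show ?thesis by (simp add: card_Diff_subset)
qed

lemma line_in_C:
  fixes x :: "'a::field ^ 'n"
  assumes "vec.subspace C" "x \<in> C - {0}" shows "line x \<subseteq> C - {0}"
  unfolding line_def using assms vec.subspace_scale by auto

lemma card_ge2: "CARD('a::{finite,field}) \<ge> 2"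
proof -
  have "card {0::'a, 1} \<le> CARD('a)" by (rule card_mono) auto
  then show ?thesis by simp
qed

theorem mainTheorem6:
  fixes C :: "('a::{finite,field} ^ 'n) set" and k :: nat and \<alpha> :: 'a and a b :: "'a ^ 'n"
  assumes "primitive_elem \<alpha>"
    and "MWS C k"
    and "a \<in> C - {0}" and "b \<in> C - {0}"
    and "Vvec \<alpha> a = Vvec \<alpha> b"
  shows "\<exists>c::'a. c \<noteq> 0 \<and> a = c *s b"
proof (rule ccontr)
  assume nex: "\<not> ?thesis"
  let ?q = "CARD('a)"
  have sub: "vec.subspace C" and dimC: "vec.dim C = k"
    and cardW: "card (hamming_weight ` (C - {0})) = (?q ^ k - 1) div (?q - 1)"
    using assms(2) unfolding MWS_def linear_code_def by auto
  obtain B where B: "B \<subseteq> C" "vec.independent B" "C \<subseteq> vec.span B" "card B = vec.dim C"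
    by (rule vec.basis_exists)
  have "vec.span B = C" using B sub by (simp add: vec.span_subspace)
  then have cardC: "card C = ?q ^ k"
    using card_span_indep[of B] B dimC by simp
  have z: "0 \<in> C" using sub vec.subspace_0 by blast
  have cardC0: "card (C - {0}) = ?q ^ k - 1" using cardC z by (simp add: card_Diff_singleton)
  define L where "L = line ` (C - {0})"
  have UL: "\<Union>L = C - {0}"
    unfolding L_def using line_in_C[OF sub] in_line_self by blast
  have part: "(?q - 1) * card L = card (\<Union>L)"
  proof (rule card_partition)
    show "finite L" unfolding L_def by simp
    show "finite (\<Union>L)" by simp
    show "\<And>c. c \<in> L \<Longrightarrow> card c = ?q - 1" unfolding L_def using card_line by auto
    show "\<And>c1 c2. c1 \<in> L \<Longrightarrow> c2 \<in> L \<Longrightarrow> c1 \<noteq> c2 \<Longrightarrow> c1 \<inter> c2 = {}"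
      unfolding L_def by (auto dest: line_sub)
  qed
  have q1: "?q - 1 > 0" using card_ge2[where 'a='a] by simp
  have cardL: "card L = (?q ^ k - 1) div (?q - 1)"
    using part UL cardC0 q1 by (metis nonzero_mult_div_cancel_left less_not_refl2)
  define h where "h S = hamming_weight (SOME x. x \<in> S)" for S :: "('a ^ 'n) set"
  have hline: "h (line x) = hamming_weight x" for x :: "'a ^ 'n"
  proof -
    have "(SOME y. y \<in> line x) \<in> line x" using in_line_self by (rule someI)
    then obtain c where "c \<noteq> 0" "(SOME y. y \<in> line x) = c *s x" unfolding line_def by auto
    then show ?thesis unfolding h_def by (simp add: hw_scale)
  qed
  have img: "hamming_weight ` (C - {0}) = h ` L"
    unfolding L_def image_image hline ..
  have "coord_count a 0 = coord_count b 0"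
    using arg_cong[OF assms(5), of last] unfolding Vvec_def by simp
  then have hwab: "hamming_weight a = hamming_weight b" by (simp add: hw_count)
  have neq: "line a \<noteq> line b"
  proof
    assume "line a = line b"
    then have "a \<in> line b" using in_line_self by metis
    then show False using nex unfolding line_def by auto
  qed
  have "\<not> inj_on h L"
  proof
    assume "inj_on h L"
    moreover have "line a \<in> L" "line b \<in> L" using assms(3,4) unfolding L_def by auto
    moreover have "h (line a) = h (line b)" using hwab hline by simp
    ultimately show False using neq by (meson inj_onD)
  qed
  then have "card (h ` L) \<noteq> card L" using inj_on_iff_eq_card[of L h] L_def by simp
  moreover have "card (h ` L) \<le> card L" by (rule card_image_le) (simp add: L_def)
  ultimately show False using img cardW cardL by simp
qed

end
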